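(* For every integer $L\geq 0$, \[ \sum_{j=-\infty}^{\infty} (-1)^j q^{j^2} \left(\frac{j+1}{3}\right) {2L+1 \brack L-j}_{q^2} = \frac{(q^3;q^6)_L}{(q;q^2)_L}. \]
   Context: For a variable $a$ and integer $n\ge 0$, $(a;q)_n=(1-a)(1-aq)\cdots(1-aq^{n-1})$ (with $(a;q)_0=1$). The $q$-binomial coefficient is ${A \brack B}_q=\frac{(q;q)_A}{(q;q)_B(q;q)_{A-B}}$ if $0\le B\le A$ are integers, and $0$ otherwise; ${A\brack B}_{q^2}$ is the same with $q$ replaced by $q^2$. $\left(\frac{j}{3}\right)$ is the Legendre symbol modulo 3: it equals $1$ if $j\equiv 1 \pmod 3$, $-1$ if $j\equiv -1\pmod 3$, and $0$ if $3\mid j$. *)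

theory Defs
  imports "HOL-Computational_Algebra.Formal_Power_Series"
begin

definition qpoch :: "'a::comm_ring_1 \<Rightarrow> 'a \<Rightarrow> nat \<Rightarrow> 'a" where
  "qpoch a q n = (\<Prod>k<n. (1 - a * q ^ k))"

definition qbinom :: "'a::{comm_ring_1,inverse} \<Rightarrow> int \<Rightarrow> int \<Rightarrow> 'a" where
  "qbinom q A B = (if 0 \<le> B \<and> B \<le> A
     then qpoch q q (nat A) / (qpoch q q (nat B) * qpoch q q (nat (A - B))) else 0)"

definition legendre3 :: "int \<Rightarrow> int" where
  "legendre3 j = (if j mod 3 = 1 then 1 else if j mod 3 = 2 then -1 else 0)"

end

theory Submission
  imports Defs
begin

datatype 'b eis = Eis (ere: 'b) (eim: 'b)

instantiation eis :: (comm_ring_1) comm_ring_1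
begin
definition "0 = Eis 0 0"
definition "1 = Eis 1 0"
definition "x + y = Eis (ere x + ere y) (eim x + eim y)"
definition "x - y = Eis (ere x - ere y) (eim x - eim y)"
definition "- x = Eis (- ere x) (- eim x)"
definition "x * y = Eis (ere x * ere y - eim x * eim y) (ere x * eim y + eim x * ere y - eim x * eim y)"
instance
  by standard (auto simp: zero_eis_def one_eis_def plus_eis_def minus_eis_def uminus_eis_def
      times_eis_def eis.expand algebra_simps)
end

definition emb :: "'b::comm_ring_1 \<Rightarrow> 'b eis" where "emb a = Eis a 0"
definition om :: "'b::comm_ring_1 eis" where "om = Eis 0 1"

lemma emb_mult[simp]: "emb (a*b) = emb a * emb b"
  by (simp add: emb_def times_eis_def)
lemma emb_add[simp]: "emb (a+b) = emb a + emb b"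
  by (simp add: emb_def plus_eis_def)
lemma emb_diff[simp]: "emb (a-b) = emb a - emb b"
  by (simp add: emb_def minus_eis_def)
lemma emb_neg[simp]: "emb (-a) = - emb a"
  by (simp add: emb_def uminus_eis_def)
lemma emb_1[simp]: "emb 1 = 1"
  by (simp add: emb_def one_eis_def)
lemma emb_0[simp]: "emb 0 = 0"
  by (simp add: emb_def zero_eis_def)
lemma emb_pow[simp]: "emb (a^n) = emb a ^ n"
  by (induction n) auto
lemma eim_emb_mult[simp]: "eim (emb a * w) = a * eim w"
  by (simp add: emb_def times_eis_def)
lemma eim_sum: "eim (sum f A) = sum (\<lambda>x. eim (f x)) A"
  by (induction A rule: infinite_finite_induct) (auto simp: zero_eis_def plus_eis_def)

lemma om_pow: "(om::'b::comm_ring_1 eis) ^ n = (if n mod 3 = 0 then 1 else if n mod 3 = 1 then om else Eis (-1) (-1))"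
proof (induction n)
  case 0 then show ?case by simp
next
  case (Suc n)
  have "n mod 3 = 0 \<or> n mod 3 = 1 \<or> n mod 3 = 2" by auto
  then show ?case using Suc
    by (auto simp: mod_Suc om_def times_eis_def one_eis_def)
qed

lemma eim_om_pow: "eim ((om::'b::comm_ring_1 eis) ^ n) = of_int (legendre3 (int n))"
proof -
  have "n mod 3 = 0 \<or> n mod 3 = 1 \<or> n mod 3 = 2" by auto
  moreover have "int n mod 3 = int (n mod 3)" by (simp add: zmod_int)
  ultimately show ?thesis
    unfolding om_pow by (auto simp: legendre3_def om_def one_eis_def)
qed

lemma om_key: "(om - emb a) * (1 - om * emb a) * om^2 = emb (1 + a + a^2::'b::comm_ring_1)"
  by (simp add: om_def emb_def times_eis_def minus_eis_def one_eis_def plus_eis_def power2_eq_square algebra_simps)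

lemma eim_last: "eim ((om - emb a) * emb (b::'b::comm_ring_1)) = b"
  by (simp add: om_def emb_def times_eis_def minus_eis_def)

fun gb :: "'a::comm_ring_1 \<Rightarrow> nat \<Rightarrow> nat \<Rightarrow> 'a" where
  "gb p n 0 = 1"
| "gb p 0 (Suc k) = 0"
| "gb p (Suc n) (Suc k) = gb p n k + p^(Suc k) * gb p n (Suc k)"

lemma gb_zero: "n < k \<Longrightarrow> gb p n k = 0"
proof (induction n arbitrary: k)
  case 0 then show ?case by (cases k) auto
next
  case (Suc n) then show ?case by (cases k) auto
qed

definition tri :: "nat \<Rightarrow> nat" where "tri k = (\<Sum>i<k. i)"

lemma tri_Suc: "tri (Suc k) = tri k + k" by (simp add: tri_def)
lemma tri_2: "2 * tri k = k * (k - 1)"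
proof (induction k)
  case 0 then show ?case by (simp add: tri_def)
next
  case (Suc k) then show ?case by (cases k) (simp_all add: tri_Suc algebra_simps)
qed

lemma qbin: "(\<Prod>m<n. y + x * p^m) = (\<Sum>k\<le>n. gb p n k * p^(tri k) * x^k * y^(n-k))"
proof (induction n arbitrary: x)
  case 0 then show ?case by (simp add: tri_def)
next
  case (Suc n)
  define f where "f k = gb p n k * p^(tri k + k) * x^k * y^(Suc n - k)" for k
  define g where "g k = gb p n k * p^(tri k + k) * x^(Suc k) * y^(n - k)" for k
  have "(\<Prod>m<Suc n. y + x * p^m) = (y + x) * (\<Prod>m<n. y + (x*p) * p^m)"
    by (subst prod.lessThan_Suc_shift) (simp add: mult.assoc)
  also have "\<dots> = (y + x) * (\<Sum>k\<le>n. gb p n k * p^(tri k) * (x*p)^k * y^(n-k))"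
    using Suc by simp
  also have "\<dots> = (\<Sum>k\<le>n. y * (gb p n k * p^(tri k) * (x*p)^k * y^(n-k))) + (\<Sum>k\<le>n. x * (gb p n k * p^(tri k) * (x*p)^k * y^(n-k)))"
    by (simp only: distrib_right sum_distrib_left sum.distrib)
  also have "\<dots> = (\<Sum>k\<le>n. f k) + (\<Sum>k\<le>n. g k)"
    unfolding f_def g_def
    by (intro arg_cong2[where f="(+)"] sum.cong refl)
       (auto simp: power_add power_mult_distrib Suc_diff_le algebra_simps)
  also have "(\<Sum>k\<le>n. f k) = (\<Sum>k\<le>Suc n. f k)"
    by (simp add: f_def gb_zero)
  also have "\<dots> = f 0 + (\<Sum>k\<le>n. f (Suc k))"
    by (rule sum.atMost_Suc_shift)
  also have "f 0 + (\<Sum>k\<le>n. f (Suc k)) + (\<Sum>k\<le>n. g k)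
     = f 0 + (\<Sum>k\<le>n. f (Suc k) + g k)"
    by (simp add: sum.distrib add.assoc)
  also have "\<dots> = (\<Sum>k\<le>Suc n. gb p (Suc n) k * p^(tri k) * x^k * y^(Suc n-k))"
    unfolding sum.atMost_Suc_shift[of "\<lambda>k. gb p (Suc n) k * p^(tri k) * x^k * y^(Suc n-k)"]
    by (intro arg_cong2[where f="(+)"] sum.cong refl)
       (simp_all add: f_def g_def tri_Suc algebra_simps power_add tri_def)
  finally show ?case .
qed

lemma prodL: "(\<Prod>m<2*L+1. z*q^(2*L+1) - q^(2*m+2)) =
   (-1)^L * q^((L+1)*(3*L+1)) * ((\<Prod>i\<le>L. z - q^(2*i+1)) * (\<Prod>i<L. 1 - z*q^(2*i+1)))"
  for z q :: "'a::comm_ring_1"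
proof (induction L)
  case 0 then show ?case by (simp add: algebra_simps power2_eq_square)
next
  case (Suc L)
  have A: "(\<Prod>m<2*Suc L+1. z*q^(2*Suc L+1) - q^(2*m+2)) =
     (z*q^(2*Suc L+1) - q^(2*0+2)) * (\<Prod>m<2*L+2. z*q^(2*Suc L+1) - q^(2*Suc m+2))"
  proof -
    have e: "2*Suc L+1 = Suc (2*L+2)" by simp
    show ?thesis unfolding e prod.lessThan_Suc_shift by simp
  qed
  have B: "(\<Prod>m<2*L+2. z*q^(2*Suc L+1) - q^(2*Suc m+2)) = (\<Prod>m<2*L+2. q^2 * (z*q^(2*L+1) - q^(2*m+2)))"
  proof (intro prod.cong refl)
    fix m
    have "q^(2*Suc L+1) = q^2*q^(2*L+1)" "q^(2*Suc m+2) = q^2*q^(2*m+2)"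
      by (simp_all add: power_add[symmetric] power2_eq_square)
    then show "z*q^(2*Suc L+1) - q^(2*Suc m+2) = q^2 * (z*q^(2*L+1) - q^(2*m+2))"
      by (simp add: algebra_simps)
  qed
  have C: "\<dots> = q^(2*(2*L+2)) * ((z*q^(2*L+1) - q^(2*(2*L+1)+2)) * (\<Prod>m<2*L+1. z*q^(2*L+1) - q^(2*m+2)))"
  proof -
    have e: "2*L+2 = Suc (2*L+1)" by simp
    show ?thesis
      unfolding prod.distrib prod_constant card_lessThan power_mult[symmetric]
      unfolding e prod.lessThan_Suc by (simp only: mult_ac)
  qed
  have D1: "z*q^(2*Suc L+1) - q^(2*0+2) = -(q^2) * (1 - z*q^(2*L+1))"
    by (simp add: algebra_simps power_add power2_eq_square)
  have D2: "z*q^(2*L+1) - q^(2*(2*L+1)+2) = q^(2*L+1) * (z - q^(2*Suc L+1))"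
  proof -
    have ee: "2*(2*L+1)+2 = (2*L+1) + (2*Suc L+1)" by simp
    have "q^(2*(2*L+1)+2) = q^(2*L+1) * q^(2*Suc L+1)" by (simp only: ee power_add)
    then show ?thesis by (simp add: algebra_simps)
  qed
  have D3: "q^((Suc L+1)*(3*Suc L+1)) = q^2 * q^(2*(2*L+2)) * q^(2*L+1) * q^((L+1)*(3*L+1))"
  proof -
    have ee: "(Suc L+1)*(3*Suc L+1) = 2 + 2*(2*L+2) + (2*L+1) + (L+1)*(3*L+1)" by (simp add: algebra_simps)
    show ?thesis by (simp only: ee power_add)
  qed
  have D4: "(\<Prod>i\<le>Suc L. z - q^(2*i+1)) = (\<Prod>i\<le>L. z - q^(2*i+1)) * (z - q^(2*Suc L+1))"
    by simp
  have D5: "(\<Prod>i<Suc L. 1 - z*q^(2*i+1)) = (\<Prod>i<L. 1 - z*q^(2*i+1)) * (1 - z*q^(2*L+1))"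
    by simp
  show ?case
    unfolding A B C Suc D1 D2 D3 D4 D5 power_Suc
    by (simp only: mult_ac mult_minus_left mult_minus_right minus_mult_commute mult_1_left)
qed

lemma expo: assumes "k \<le> 2*L+1"
  shows "2 * tri k + 2*k + (2*L+1)*(2*L+1-k) = (L+1)*(3*L+1) + nat ((int L - int k)^2)"
proof -
  have h1: "int (2*tri k) = int k * (int k - 1)"
    unfolding tri_2 by (cases k) (simp_all add: algebra_simps)
  have h2: "int ((2*L+1)*(2*L+1-k)) = (2*int L+1)*(2*int L+1-int k)"
    unfolding of_nat_mult of_nat_diff[OF assms] by (simp add: add.commute)
  have "int (2 * tri k + 2*k + (2*L+1)*(2*L+1-k)) = int k * (int k - 1) + 2 * int k + (2*int L+1)*(2*int L+1-int k)"
    unfolding of_nat_add h1 h2 by simp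
  also have "\<dots> = int ((L+1)*(3*L+1) + nat ((int L - int k)^2))"
  proof -
    have "int (nat ((int L - int k)^2)) = (int L - int k)^2" by simp
    then show ?thesis unfolding of_nat_add by (simp add: algebra_simps power2_eq_square)
  qed
  finally show ?thesis by (simp only: of_nat_eq_iff)
qed

lemma comb:
  fixes q z :: "'a::comm_ring_1"
  shows "(-1)^L * q^((L+1)*(3*L+1)) * (\<Sum>k\<le>2*L+1. (-1)^(k+L) * q^(nat((int L - int k)^2)) * gb (q^2) (2*L+1) k * z^(2*L+1-k))
    = (-1)^L * q^((L+1)*(3*L+1)) * ((\<Prod>i\<le>L. z - q^(2*i+1)) * (\<Prod>i<L. 1 - z*q^(2*i+1)))"
proof -
  have "(-1)^L * q^((L+1)*(3*L+1)) * ((\<Prod>i\<le>L. z - q^(2*i+1)) * (\<Prod>i<L. 1 - z*q^(2*i+1)))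
     = (\<Prod>m<2*L+1. z*q^(2*L+1) + (-(q^2)) * (q^2)^m)"
    unfolding prodL[symmetric] by (intro prod.cong refl) (simp add: power_mult[symmetric] power_add[symmetric])
  also have "\<dots> = (\<Sum>k\<le>2*L+1. gb (q^2) (2*L+1) k * (q^2)^(tri k) * (-(q^2))^k * (z*q^(2*L+1))^(2*L+1-k))"
    by (rule qbin)
  also have "\<dots> = (\<Sum>k\<le>2*L+1. (-1)^L * q^((L+1)*(3*L+1)) * ((-1)^(k+L) * q^(nat((int L - int k)^2)) * gb (q^2) (2*L+1) k * z^(2*L+1-k)))"
  proof (intro sum.cong refl)
    fix k assume "k \<in> {..2*L+1}"
    then have ex: "2 * tri k + 2*k + (2*L+1)*(2*L+1-k) = (L+1)*(3*L+1) + nat ((int L - int k)^2)"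
      using expo[of k L] by simp
    have e: "q^(2 * tri k) * q^(2*k) * q^((2*L+1)*(2*L+1-k)) = q^((L+1)*(3*L+1)) * q^(nat ((int L - int k)^2))"
      unfolding power_add[symmetric] ex ..
    have s0: "(-1::'a)^L * (-1)^L = 1"
      by (simp add: power_mult_distrib[symmetric])
    have "(-1::'a)^L * (-1)^(k+L) = (-1)^k * ((-1)^L * (-1)^L)"
      by (simp add: power_add mult_ac)
    then have s: "(-1::'a)^L * (-1)^(k+L) = (-1)^k" using s0 by simp
    have "gb (q^2) (2*L+1) k * (q^2)^(tri k) * (-(q^2))^k * (z*q^(2*L+1))^(2*L+1-k)
       = (-1)^k * (q^(2 * tri k) * q^(2*k) * q^((2*L+1)*(2*L+1-k))) * gb (q^2) (2*L+1) k * z^(2*L+1-k)"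
    proof -
      have m1: "(-(q^2))^k = (-1)^k * q^(2*k)" by (simp add: power_minus' power_mult)
      have m2: "(z*q^(2*L+1))^(2*L+1-k) = z^(2*L+1-k) * q^((2*L+1)*(2*L+1-k))"
        by (simp only: power_mult_distrib power_mult)
      have m3: "(q^2)^(tri k) = q^(2*tri k)" by (simp add: power_mult)
      show ?thesis unfolding m1 m2 m3 by (simp only: mult_ac)
    qed
    also have "\<dots> = ((-1::'a)^L * (-1)^(k+L)) * q^((L+1)*(3*L+1)) * q^(nat ((int L - int k)^2)) * gb (q^2) (2*L+1) k * z^(2*L+1-k)"
      unfolding e s by (simp only: mult_ac)
    finally show "gb (q^2) (2*L+1) k * (q^2)^(tri k) * (-(q^2))^k * (z*q^(2*L+1))^(2*L+1-k)
       = (-1)^L * q^((L+1)*(3*L+1)) * ((-1)^(k+L) * q^(nat((int L - int k)^2)) * gb (q^2) (2*L+1) k * z^(2*L+1-k))"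
      by (simp only: mult_ac)
  qed
  also have "\<dots> = (-1)^L * q^((L+1)*(3*L+1)) * (\<Sum>k\<le>2*L+1. (-1)^(k+L) * q^(nat((int L - int k)^2)) * gb (q^2) (2*L+1) k * z^(2*L+1-k))"
    by (simp only: sum_distrib_left)
  finally show ?thesis ..
qed

lemma emb_gb: "gb (emb p) n k = emb (gb p n k)"
proof (induction n arbitrary: k)
  case 0 then show ?case by (cases k) simp_all
next
  case (Suc n) then show ?case by (cases k) simp_all
qed

lemma emb_prod: "emb (prod f A) = prod (\<lambda>x. emb (f x)) A"
  by (induction A rule: infinite_finite_induct) simp_all

lemma gb_qpoch: "k \<le> n \<Longrightarrow> gb p n k * (qpoch p p k * qpoch p p (n-k)) = qpoch p p n"
proof (induction n arbitrary: k)
  case 0 then show ?case by (simp add: qpoch_def)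
next
  case (Suc n)
  have QS: "qpoch p p (Suc m) = qpoch p p m * (1 - p^(Suc m))" for m
    by (simp add: qpoch_def)
  show ?case
  proof (cases k)
    case 0 then show ?thesis by (simp add: qpoch_def)
  next
    case (Suc k')
    then have kn: "k' \<le> n" using Suc.prems by simp
    have T1: "gb p n k' * (qpoch p p (Suc k') * qpoch p p (n - k')) = qpoch p p n * (1 - p^(Suc k'))"
      using Suc.IH[OF kn] unfolding QS by (simp add: algebra_simps)
    have T2: "p^(Suc k') * gb p n (Suc k') * (qpoch p p (Suc k') * qpoch p p (n - k'))
        = qpoch p p n * (p^(Suc k') - p^(Suc n))"
    proof (cases "k' = n")
      case True then show ?thesis by (simp add: gb_zero)
    next
      case False
      then have kn2: "Suc k' \<le> n" using kn by simp
      then have e: "n - k' = Suc (n - Suc k')" by simp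
      have pe: "p^(Suc k') * p^(Suc (n - Suc k')) = p^(Suc n)"
      proof -
        have "Suc k' + Suc (n - Suc k') = Suc n" using kn2 by simp
        then show ?thesis by (simp only: power_add[symmetric])
      qed
      have "p^(Suc k') * gb p n (Suc k') * (qpoch p p (Suc k') * qpoch p p (n - k'))
          = p^(Suc k') * (gb p n (Suc k') * (qpoch p p (Suc k') * qpoch p p (n - Suc k'))) * (1 - p^(Suc (n - Suc k')))"
        unfolding e QS[of "n - Suc k'"] by (simp only: mult_ac)
      also have "\<dots> = qpoch p p n * (p^(Suc k') - p^(Suc k') * p^(Suc (n - Suc k')))"
        unfolding Suc.IH[OF kn2] by (simp add: algebra_simps)
      finally show ?thesis unfolding pe .
    qed
    have "gb p (Suc n) k * (qpoch p p k * qpoch p p (Suc n - k))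
        = gb p n k' * (qpoch p p (Suc k') * qpoch p p (n - k'))
          + p^(Suc k') * gb p n (Suc k') * (qpoch p p (Suc k') * qpoch p p (n - k'))"
      unfolding Suc by (simp add: algebra_simps)
    also have "\<dots> = qpoch p p (Suc n)"
      unfolding T1 T2 QS[of n] by (simp add: algebra_simps)
    finally show ?thesis .
  qed
qed

lemma fps_one_minus_nz: "(1 - fps_X * f :: 'a::field fps) \<noteq> 0"
proof
  assume "1 - fps_X * f = 0"
  then have "fps_nth (1 - fps_X * f) 0 = 0" by simp
  then show False by simp
qed

lemma qpoch_X2_nz: "qpoch ((fps_X::'a::field fps)^2) (fps_X^2) m \<noteq> 0"
proof -
  have h: "(1 - (fps_X::'a fps)^2 * (fps_X^2)^i) \<noteq> 0" for i
  proof -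
    have "(1 - (fps_X::'a fps)^2 * (fps_X^2)^i) = 1 - fps_X * (fps_X * (fps_X^2)^i)"
      by (simp add: power2_eq_square mult.assoc)
    then show ?thesis using fps_one_minus_nz by metis
  qed
  show ?thesis unfolding qpoch_def using h by (simp only: prod_zero_iff[OF finite_lessThan]) blast
qed

lemma qbinom_gb: "k \<le> n \<Longrightarrow> qbinom ((fps_X::'a::field fps)^2) (int n) (int k) = gb (fps_X^2) n k"
  unfolding qbinom_def
  using gb_qpoch[of k n "(fps_X::'a fps)^2"] qpoch_X2_nz[where 'a='a]
  by (simp add: nat_diff_distrib of_nat_diff[symmetric] del: of_nat_diff)
     (metis nonzero_mult_div_cancel_right mult_eq_0_iff qpoch_X2_nz)

lemma om_rhs:
  fixes x :: "nat \<Rightarrow> 'b::comm_ring_1"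
  shows "((\<Prod>i\<le>L. om - emb (x i)) * (\<Prod>i<L. 1 - om * emb (x i))) * om^(2*L)
     = (om - emb (x L)) * emb (\<Prod>i<L. 1 + x i + (x i)^2)"
proof -
  have "om^(2*L) = (\<Prod>i<L. (om::'b eis)^2)"
    by (simp only: prod_constant card_lessThan power_mult)
  then have "((\<Prod>i\<le>L. om - emb (x i)) * (\<Prod>i<L. 1 - om * emb (x i))) * om^(2*L)
     = (om - emb (x L)) * (\<Prod>i<L. (om - emb (x i)) * (1 - om * emb (x i)) * om^2)"
    by (simp add: prod.distrib lessThan_Suc_atMost[symmetric] mult_ac)
  also have "\<dots> = (om - emb (x L)) * emb (\<Prod>i<L. 1 + x i + (x i)^2)"
    by (simp only: om_key emb_prod)
  finally show ?thesis .
qed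

lemma core:
  fixes L :: nat
  shows "(\<Sum>k\<le>2*L+1. ((-1)^(k+L) * fps_X^(nat((int L - int k)^2)) * gb (fps_X^2) (2*L+1) k)
            * of_int (legendre3 (int (2*L+1-k+2*L))))
       = (\<Prod>i<L. 1 + fps_X^(2*i+1) + (fps_X^(2*i+1))^2 :: 'a::field fps)"
proof -
  define X where "X = (fps_X :: 'a fps)"
  define c where "c = (-1)^L * X^((L+1)*(3*L+1))"
  define t where "t k = (-1)^(k+L) * X^(nat((int L - int k)^2)) * gb (X^2) (2*L+1) k" for k
  define x where "x i = X^(2*i+1)" for i
  have E1: "emb c * (\<Sum>k\<le>2*L+1. emb (t k) * om^(2*L+1-k))
     = emb c * ((\<Prod>i\<le>L. om - emb (x i)) * (\<Prod>i<L. 1 - om * emb (x i)))"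
  proof -
    have ec: "emb c = (-1)^L * (emb X)^((L+1)*(3*L+1))" by (simp add: c_def)
    have et: "emb (t k) = (-1)^(k+L) * (emb X)^(nat((int L - int k)^2)) * gb ((emb X)^2) (2*L+1) k" for k
      by (simp add: t_def emb_gb[symmetric])
    have ex: "emb (x i) = (emb X)^(2*i+1)" for i by (simp add: x_def)
    show ?thesis unfolding ec et ex by (rule comb)
  qed
  have E2: "emb c * (\<Sum>k\<le>2*L+1. emb (t k) * om^(2*L+1-k+2*L))
     = emb c * ((om - emb (x L)) * emb (\<Prod>i<L. 1 + x i + (x i)^2))"
  proof -
    have "emb c * (\<Sum>k\<le>2*L+1. emb (t k) * om^(2*L+1-k+2*L))
       = (emb c * (\<Sum>k\<le>2*L+1. emb (t k) * om^(2*L+1-k))) * om^(2*L)"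
    proof -
      have "(\<Sum>k\<le>2*L+1. emb (t k) * om^(2*L+1-k+2*L)) = (\<Sum>k\<le>2*L+1. emb (t k) * om^(2*L+1-k)) * om^(2*L)"
        by (simp only: sum_distrib_right power_add mult.assoc)
      then show ?thesis by (simp only: mult.assoc)
    qed
    also have "\<dots> = emb c * (((\<Prod>i\<le>L. om - emb (x i)) * (\<Prod>i<L. 1 - om * emb (x i))) * om^(2*L))"
      unfolding E1 by (simp only: mult_ac)
    also have "\<dots> = emb c * ((om - emb (x L)) * emb (\<Prod>i<L. 1 + x i + (x i)^2))"
      unfolding om_rhs ..
    finally show ?thesis .
  qed
  have E3: "c * (\<Sum>k\<le>2*L+1. t k * of_int (legendre3 (int (2*L+1-k+2*L))))
      = c * (\<Prod>i<L. 1 + x i + (x i)^2)"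
    using arg_cong[OF E2, of eim] by (simp only: eim_emb_mult eim_sum eim_om_pow eim_last)
  have "c \<noteq> 0" by (simp add: c_def X_def)
  with E3 have "(\<Sum>k\<le>2*L+1. t k * of_int (legendre3 (int (2*L+1-k+2*L))))
      = (\<Prod>i<L. 1 + x i + (x i)^2)" by simp
  then show ?thesis by (simp add: t_def x_def X_def)
qed

lemma leg3: "legendre3 (a + 3*b) = legendre3 a"
  by (simp add: legendre3_def)

lemma sign_par: "(-1::'a::comm_ring_1)^nat \<bar>int L - int k\<bar> = (-1)^(k+L)"
proof (cases "k \<le> L")
  case True
  then have e1: "nat \<bar>int L - int k\<bar> = L - k" and e2: "k + L = (L - k) + 2*k" by auto
  show ?thesis unfolding e1 e2 power_add power_mult by simp
next
  case False
  then have e1: "nat \<bar>int L - int k\<bar> = k - L" and e2: "k + L = (k - L) + 2*L" by auto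
  show ?thesis unfolding e1 e2 power_add power_mult by simp
qed

theorem theorem2p5:
  fixes L :: nat
  shows "(\<Sum>j\<in>{- int L - 1 .. int L}.
            (-1) ^ nat \<bar>j\<bar> * fps_X ^ nat (j^2) * of_int (legendre3 (j + 1))
            * qbinom (fps_X ^ 2) (2 * int L + 1) (int L - j))
         = qpoch (fps_X ^ 3) (fps_X ^ 6) L / qpoch (fps_X :: 'a::field fps) (fps_X ^ 2) L"
proof -
  define T where "T j = ((-1) ^ nat \<bar>j\<bar> * fps_X ^ nat (j^2) * of_int (legendre3 (j + 1))
            * qbinom (fps_X ^ 2) (2 * int L + 1) (int L - j) :: 'a fps)" for j :: int
  define P where "P = (\<Prod>i<L. 1 + fps_X^(2*i+1) + (fps_X^(2*i+1))^2 :: 'a fps)"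
  have S1: "(\<Sum>j\<in>{- int L - 1 .. int L}. T j) = (\<Sum>k\<le>2*L+1. T (int L - int k))"
    by (rule sum.reindex_bij_witness[of _ "\<lambda>k. int L - int k" "\<lambda>j. nat (int L - j)"]) auto
  have S2: "T (int L - int k) = ((-1)^(k+L) * fps_X^(nat((int L - int k)^2)) * gb (fps_X^2) (2*L+1) k)
            * of_int (legendre3 (int (2*L+1-k+2*L)))" if "k \<in> {..2*L+1}" for k
  proof -
    from that have k: "k \<le> 2*L+1" by simp
    have q: "qbinom (fps_X ^ 2) (2 * int L + 1) (int L - (int L - int k)) = gb ((fps_X::'a fps)^2) (2*L+1) k"
      using qbinom_gb[OF k, where 'a='a] by (simp add: ac_simps)
    have l: "legendre3 (int L - int k + 1) = legendre3 (int (2*L+1-k+2*L))"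
    proof -
      have "int (2*L+1-k+2*L) = (int L - int k + 1) + 3 * int L" using k by (simp add: of_nat_diff)
      then show ?thesis by (simp only: leg3)
    qed
    show ?thesis unfolding T_def l sign_par using q by (simp add: mult_ac)
  qed
  have S: "(\<Sum>j\<in>{- int L - 1 .. int L}. T j) = P"
    unfolding S1 P_def core[of L, where 'a='a, symmetric] by (rule sum.cong[OF refl S2])
  have B: "qpoch (fps_X :: 'a fps) (fps_X ^ 2) L \<noteq> 0"
  proof -
    have "(1 - (fps_X::'a fps) * (fps_X^2)^i) \<noteq> 0" for i by (rule fps_one_minus_nz)
    then show ?thesis unfolding qpoch_def by (simp only: prod_zero_iff[OF finite_lessThan]) blast
  qed
  have A: "qpoch (fps_X ^ 3) (fps_X ^ 6) L = P * qpoch (fps_X :: 'a fps) (fps_X ^ 2) L"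
    unfolding P_def qpoch_def prod.distrib[symmetric]
  proof (intro prod.cong refl)
    fix i
    define y where "y = (fps_X::'a fps)^(2*i+1)"
    have y1: "(fps_X::'a fps) * (fps_X^2)^i = y" by (simp add: y_def power_mult[symmetric] power_Suc)
    have y3: "(fps_X::'a fps)^3 * (fps_X^6)^i = y^3"
      by (simp add: y_def power_mult[symmetric] power_add[symmetric] algebra_simps)
    show "1 - (fps_X::'a fps)^3 * (fps_X^6)^i = (1 + fps_X^(2*i+1) + (fps_X^(2*i+1))^2) * (1 - fps_X * (fps_X^2)^i)"
      unfolding y1 y3 y_def[symmetric] by (simp add: algebra_simps power2_eq_square power3_eq_cube)
  qed
  show ?thesis
    unfolding T_def[symmetric] S A using B by simp
qed

end
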